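(* Let $\mathcal{X}=\{x_1,\dots,x_n\}$, $\mathcal{X}_{\mathrm{in}}\subseteq\mathcal{X}$ with $n_{\mathrm{in}}$ points, and let $\mathcal{X}_{\mathrm{out}}\subseteq\mathcal{X}_{\mathrm{in}}$ be a random subset of size $n_{\mathrm{out}}$. Let $\mathbf{k}$ be a reproducing kernel generating $K$, i.e. $K=(\mathbf{k}(x_i,x_j))_{i,j=1}^n$. If $p_{\mathrm{in}}-q_{\mathrm{out}}$ is $(K,\nu)$-sub-Gaussian on an event $\mathcal{E}$, then $(\mathbb{P}_{\mathrm{in}}-\mathbb{P}_{\mathrm{out}})\mathbf{k}$ is $(\mathbf{k},\nu)$-sub-Gaussian on $\mathcal{E}$.
   Context: $p_{\mathrm{in},i}=\mathbf{1}\{x_i\in\mathcal{X}_{\mathrm{in}}\}/n_{\mathrm{in}}$, $q_{\mathrm{out},i}=\mathbf{1}\{x_i\in\mathcal{X}_{\mathrm{out}}\}/n_{\mathrm{out}}$. $(\mathbb{P}_{\mathrm{in}}-\mathbb{P}_{\mathrm{out}})\mathbf{k}:=\frac{1}{n_{\mathrm{in}}}\sum_{x\in\mathcal{X}_{\mathrm{in}}}\mathbf{k}(x,\cdot)-\frac1{n_{\mathrm{out}}}\sum_{x\in\mathcal{X}_{\mathrm{out}}}\mathbf{k}(x,\cdot)\in\mathcal{H}_{\mathbf{k}}$ (the RKHS of $\mathbf{k}$). A random $\phi\in\mathcal{H}_{\mathbf{k}}$ is $(\mathbf{k},\nu)$-sub-Gaussian on $\mathcal{E}$ if $\nu>0$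 and $\mathbb{E}[\exp(\langle f,\phi\rangle_{\mathbf{k}})\mathbf{1}_{\mathcal{E}}]\le\exp(\frac{\nu^2}{2}\|f\|_{\mathbf{k}}^2)$ for all $f\in\mathcal{H}_{\mathbf{k}}$. A random $w\in\mathbb{R}^n$ is $(K,\nu)$-sub-Gaussian on $\mathcal{E}$ if $K$ is SPSD, $\nu>0$, and $\mathbb{E}[\exp(u^\top Kw)\mathbf{1}_{\mathcal{E}}]\le\exp(\frac{\nu^2}{2}u^\top Ku)$ for all $u\in\mathbb{R}^n$. *)

theory Defs
  imports "HOL-Probability.Probability"
begin

text \<open>The RKHS of a kernel k on a point type 'x is represented (up to isometric
isomorphism) by a real Hilbert space 'h together with the canonical feature map
kf x = k(x,.) : then k x y = <k(x,.),k(y,.)> and the span of the k(x,.) is dense.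
An element f of 'h is identified with the function (\<lambda>x. f \<bullet> kf x).\<close>
definition rkhs_of :: "('x \<Rightarrow> 'x \<Rightarrow> real) \<Rightarrow> ('x \<Rightarrow> 'h::{real_inner,complete_space}) \<Rightarrow> bool" where
  "rkhs_of k kf \<longleftrightarrow> (\<forall>x y. k x y = kf x \<bullet> kf y) \<and> closure (span (range kf)) = UNIV"

definition spsd :: "real^'n^'n \<Rightarrow> bool" where
  "spsd K \<longleftrightarrow> transpose K = K \<and> (\<forall>u. 0 \<le> u \<bullet> (K *v u))"

definition vec_subgaussian_on ::
  "'a measure \<Rightarrow> 'a set \<Rightarrow> real^'n^'n \<Rightarrow> real \<Rightarrow> ('a \<Rightarrow> real^'n) \<Rightarrow> bool" where
  "vec_subgaussian_on M E K \<nu> w \<longleftrightarrow> spsd K \<and> \<nu> > 0 \<and>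
     (\<forall>u. (\<integral>\<^sup>+ \<omega>. ennreal (exp (u \<bullet> (K *v w \<omega>)) * indicator E \<omega>) \<partial>M)
            \<le> ennreal (exp (\<nu>\<^sup>2 / 2 * (u \<bullet> (K *v u)))))"

definition rkhs_subgaussian_on ::
  "'a measure \<Rightarrow> 'a set \<Rightarrow> real \<Rightarrow> ('a \<Rightarrow> 'h::real_inner) \<Rightarrow> bool" where
  "rkhs_subgaussian_on M E \<nu> \<phi> \<longleftrightarrow> \<nu> > 0 \<and>
     (\<forall>f. (\<integral>\<^sup>+ \<omega>. ennreal (exp (f \<bullet> \<phi> \<omega>) * indicator E \<omega>) \<partial>M)
            \<le> ennreal (exp (\<nu>\<^sup>2 / 2 * (norm f)\<^sup>2)))"

end

theory Submission
  imports Defs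
begin

lemma proj_exists:
  fixes v :: "'i \<Rightarrow> 'h::real_inner"
  assumes "finite I"
  shows "\<exists>c. \<forall>j\<in>I. (f - (\<Sum>i\<in>I. c i *\<^sub>R v i)) \<bullet> v j = 0"
  using assms
proof (induction I arbitrary: f rule: finite_induct)
  case empty then show ?case by simp
next
  case (insert a I)
  obtain c where c: "\<forall>j\<in>I. (f - (\<Sum>i\<in>I. c i *\<^sub>R v i)) \<bullet> v j = 0"
    using insert.IH by blast
  obtain d where d: "\<forall>j\<in>I. (v a - (\<Sum>i\<in>I. d i *\<^sub>R v i)) \<bullet> v j = 0"
    using insert.IH by blast
  define g where "g = (\<Sum>i\<in>I. c i *\<^sub>R v i)"
  define p where "p = (\<Sum>i\<in>I. d i *\<^sub>R v i)"
  define a' where "a' = v a - p"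
  have a'orth: "a' \<bullet> p = 0"
  proof -
    have "a' \<bullet> p = (\<Sum>i\<in>I. d i * (a' \<bullet> v i))" by (simp add: p_def inner_sum_right)
    also have "\<dots> = 0" using d by (simp add: a'_def p_def)
    finally show ?thesis .
  qed
  have fgp: "(f - g) \<bullet> p = 0"
    using c by (simp add: g_def p_def inner_sum_right)
  show ?case
  proof (cases "a' = 0")
    case True
    then have "v a = p" by (simp add: a'_def)
    then have "(f - g) \<bullet> v a = 0" using fgp by simp
    have s: "(\<Sum>i\<in>I. (if i = a then 0 else c i) *\<^sub>R v i) = (\<Sum>i\<in>I. c i *\<^sub>R v i)"
      by (rule sum.cong) (use insert.hyps in auto)
    show ?thesis using c insert.hyps \<open>(f - g) \<bullet> v a = 0\<close>
      by (intro exI[of _ "\<lambda>i. if i = a then 0 else c i"])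
         (auto simp: g_def s)
  next
    case False
    define t where "t = ((f - g) \<bullet> a') / (a' \<bullet> a')"
    define c' where "c' = (\<lambda>i. if i = a then t else c i - t * d i)"
    have "(\<Sum>i\<in>insert a I. c' i *\<^sub>R v i) = t *\<^sub>R v a + (\<Sum>i\<in>I. (c i - t * d i) *\<^sub>R v i)"
    proof -
      have "(\<Sum>i\<in>I. c' i *\<^sub>R v i) = (\<Sum>i\<in>I. (c i - t * d i) *\<^sub>R v i)"
        by (rule sum.cong) (use insert.hyps in \<open>auto simp: c'_def\<close>)
      then show ?thesis using insert.hyps by (simp add: c'_def)
    qed
    also have "\<dots> = g + t *\<^sub>R a'"
      by (simp add: a'_def p_def g_def scaleR_diff_left sum_subtractf scaleR_sum_right algebra_simps)
    finally have eq: "(\<Sum>i\<in>insert a I. c' i *\<^sub>R v i) = g + t *\<^sub>R a'" .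
    have a'I: "a' \<bullet> v j = 0" if "j \<in> I" for j using d that by (simp add: a'_def p_def)
    have "(f - (g + t *\<^sub>R a')) \<bullet> v a = 0"
    proof -
      have va: "v a = a' + p" by (simp add: a'_def)
      have "a' \<bullet> a' \<noteq> 0" using False by simp
      have "(f - (g + t *\<^sub>R a')) \<bullet> v a = (f - g) \<bullet> a' + (f - g) \<bullet> p - t * (a' \<bullet> a') - t * (a' \<bullet> p)"
        unfolding va by (simp add: inner_add_right inner_diff_left inner_add_left algebra_simps)
      also have "\<dots> = (f - g) \<bullet> a' - t * (a' \<bullet> a')" by (simp add: fgp a'orth)
      also have "\<dots> = 0" using \<open>a' \<bullet> a' \<noteq> 0\<close> by (simp add: t_def)
      finally show ?thesis .
    qed
    moreover have "(f - (g + t *\<^sub>R a')) \<bullet> v j = 0" if "j \<in> I" for j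
      using c a'I[OF that] that by (simp add: g_def inner_diff_left inner_add_left)
    ultimately show ?thesis by (intro exI[of _ c']) (auto simp: eq)
  qed
qed

lemma sum_range_ind:
  fixes x :: "'n::finite \<Rightarrow> 'x" and g :: "'x \<Rightarrow> 'h::real_vector"
  assumes "inj x" "A \<subseteq> range x"
  shows "(\<Sum>y\<in>A. g y) = (\<Sum>j\<in>UNIV. indicator A (x j) *\<^sub>R g (x j))"
proof -
  have "(\<Sum>j\<in>UNIV. indicator A (x j) *\<^sub>R g (x j)) = (\<Sum>j\<in>x -` A. g (x j))"
  proof -
    have "(\<Sum>j\<in>UNIV. indicator A (x j) *\<^sub>R g (x j)) = (\<Sum>j\<in>UNIV. if x j \<in> A then g (x j) else 0)"
      by (rule sum.cong) (auto simp: indicator_def)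
    also have "\<dots> = (\<Sum>j\<in>{j\<in>UNIV. x j \<in> A}. g (x j))"
      by (rule sum.inter_filter[symmetric]) simp
    finally show ?thesis by (simp add: vimage_def)
  qed
  also have "\<dots> = (\<Sum>y\<in>x ` (x -` A). g y)"
    using assms(1) by (subst sum.reindex) (auto simp: inj_on_def)
  also have "x ` (x -` A) = A" using assms(2) by auto
  finally show ?thesis by simp
qed


theorem lemmaA2:
  fixes M :: "'a measure" and E :: "'a set"
    and x :: "'n::finite \<Rightarrow> 'x"
    and Xin :: "'x set" and Xout :: "'a \<Rightarrow> 'x set" and nout :: nat
    and k :: "'x \<Rightarrow> 'x \<Rightarrow> real" and kf :: "'x \<Rightarrow> 'h::{real_inner,complete_space}"
    and K :: "real^'n^'n" and \<nu> :: real
  assumes "prob_space M" and "E \<in> sets M"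
    and "inj x"
    and "Xin \<subseteq> range x"
    and "\<forall>\<omega>\<in>space M. Xout \<omega> \<subseteq> Xin \<and> card (Xout \<omega>) = nout"
    and "rkhs_of k kf"
    and "\<forall>i j. K $ i $ j = k (x i) (x j)"
    and "vec_subgaussian_on M E K \<nu>
           (\<lambda>\<omega>. \<chi> i. indicator Xin (x i) / real (card Xin)
                     - indicator (Xout \<omega>) (x i) / real nout)"
  shows "rkhs_subgaussian_on M E \<nu>
           (\<lambda>\<omega>. (1 / real (card Xin)) *\<^sub>R (\<Sum>y\<in>Xin. kf y)
                 - (1 / real nout) *\<^sub>R (\<Sum>y\<in>Xout \<omega>. kf y))"
proof -
  define w where "w = (\<lambda>\<omega>. \<chi> i. indicator Xin (x i) / real (card Xin)
                     - indicator (Xout \<omega>) (x i) / real nout :: real^'n)"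
  have kk: "k a b = kf a \<bullet> kf b" for a b using assms(6) by (simp add: rkhs_of_def)
  have vs: "spsd K" "\<nu> > 0"
    and vb: "\<And>u. (\<integral>\<^sup>+ \<omega>. ennreal (exp (u \<bullet> (K *v w \<omega>)) * indicator E \<omega>) \<partial>M)
            \<le> ennreal (exp (\<nu>\<^sup>2 / 2 * (u \<bullet> (K *v u))))"
    using assms(8) unfolding vec_subgaussian_on_def w_def by auto
  have phi: "(1 / real (card Xin)) *\<^sub>R (\<Sum>y\<in>Xin. kf y) - (1 / real nout) *\<^sub>R (\<Sum>y\<in>Xout \<omega>. kf y)
      = (\<Sum>j\<in>UNIV. w \<omega> $ j *\<^sub>R kf (x j))" if "\<omega> \<in> space M" for \<omega>
  proof -
    have X: "Xout \<omega> \<subseteq> range x" using assms(4,5) that by auto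
    show ?thesis
      unfolding sum_range_ind[OF assms(3,4), of kf] sum_range_ind[OF assms(3) X, of kf]
        scaleR_sum_right sum_subtractf[symmetric]
    proof (rule sum.cong[OF refl])
      fix j
      show "(1 / real (card Xin)) *\<^sub>R (indicator Xin (x j) *\<^sub>R kf (x j)) -
         (1 / real nout) *\<^sub>R (indicator (Xout \<omega>) (x j) *\<^sub>R kf (x j)) = w \<omega> $ j *\<^sub>R kf (x j)"
        unfolding w_def vec_lambda_beta scaleR_scaleR scaleR_diff_left[symmetric] by simp
    qed
  qed
  show ?thesis
    unfolding rkhs_subgaussian_on_def
  proof (intro conjI allI)
    show "\<nu> > 0" by (fact vs(2))
    fix f :: 'h
    obtain u where u: "\<forall>j\<in>UNIV. (f - (\<Sum>i\<in>UNIV. u i *\<^sub>R kf (x i))) \<bullet> kf (x j) = 0"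
      using proj_exists[of "UNIV :: 'n set" f "\<lambda>i. kf (x i)"] by auto
    define g where "g = (\<Sum>i\<in>UNIV. u i *\<^sub>R kf (x i))"
    define uv where "uv = (\<chi> i. u i)"
    have fk: "f \<bullet> kf (x j) = (\<Sum>i\<in>UNIV. u i * k (x i) (x j))" for j
    proof -
      have "f \<bullet> kf (x j) = g \<bullet> kf (x j)" using u by (simp add: g_def inner_diff_left)
      then show ?thesis by (simp add: g_def inner_sum_left kk)
    qed
    have key2: "f \<bullet> (\<Sum>j\<in>UNIV. v $ j *\<^sub>R kf (x j)) = uv \<bullet> (K *v v)" for v
    proof -
      have "f \<bullet> (\<Sum>j\<in>UNIV. v $ j *\<^sub>R kf (x j)) = (\<Sum>j\<in>UNIV. v $ j * (\<Sum>i\<in>UNIV. u i * k (x i) (x j)))"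
        by (simp add: inner_sum_right fk)
      also have "\<dots> = (\<Sum>i\<in>UNIV. u i * (\<Sum>j\<in>UNIV. k (x i) (x j) * v $ j))"
      proof -
        have "(\<Sum>j\<in>UNIV. v $ j * (\<Sum>i\<in>UNIV. u i * k (x i) (x j)))
            = (\<Sum>j\<in>UNIV. \<Sum>i\<in>UNIV. u i * (k (x i) (x j) * v $ j))"
          by (simp add: sum_distrib_left mult_ac)
        also have "\<dots> = (\<Sum>i\<in>UNIV. \<Sum>j\<in>UNIV. u i * (k (x i) (x j) * v $ j))"
          by (rule sum.swap)
        also have "\<dots> = (\<Sum>i\<in>UNIV. u i * (\<Sum>j\<in>UNIV. k (x i) (x j) * v $ j))"
          by (simp add: sum_distrib_left)
        finally show ?thesis .
      qed
      also have "\<dots> = uv \<bullet> (K *v v)"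
        by (simp add: inner_vec_def matrix_vector_mult_def uv_def assms(7))
      finally show ?thesis .
    qed
    have fg: "(f - g) \<bullet> g = 0"
      using u by (simp add: g_def inner_sum_right)
    have "g \<bullet> g = f \<bullet> g" using fg by (simp add: inner_diff_left)
    also have "\<dots> = uv \<bullet> (K *v uv)"
      using key2[of uv] by (simp add: g_def uv_def)
    finally have gg: "g \<bullet> g = uv \<bullet> (K *v uv)" .
    have "f \<bullet> f = g \<bullet> g + 2 * ((f - g) \<bullet> g) + (f - g) \<bullet> (f - g)"
      by (simp add: inner_diff_left inner_diff_right inner_commute)
    then have nf: "uv \<bullet> (K *v uv) \<le> (norm f)\<^sup>2"
      using fg gg by (simp add: power2_norm_eq_inner)
    have "(\<integral>\<^sup>+ \<omega>. ennreal (exp (f \<bullet> ((1 / real (card Xin)) *\<^sub>R (\<Sum>y\<in>Xin. kf y) - (1 / real nout) *\<^sub>R (\<Sum>y\<in>Xout \<omega>. kf y))) * indicator E \<omega>) \<partial>M)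
        = (\<integral>\<^sup>+ \<omega>. ennreal (exp (uv \<bullet> (K *v w \<omega>)) * indicator E \<omega>) \<partial>M)"
      by (rule nn_integral_cong) (simp add: phi key2)
    also have "\<dots> \<le> ennreal (exp (\<nu>\<^sup>2 / 2 * (uv \<bullet> (K *v uv))))" by (rule vb)
    also have "\<dots> \<le> ennreal (exp (\<nu>\<^sup>2 / 2 * (norm f)\<^sup>2))"
      using nf by (intro ennreal_leI) (simp add: mult_left_mono)
    finally show "(\<integral>\<^sup>+ \<omega>. ennreal (exp (f \<bullet> ((1 / real (card Xin)) *\<^sub>R (\<Sum>y\<in>Xin. kf y) - (1 / real nout) *\<^sub>R (\<Sum>y\<in>Xout \<omega>. kf y))) * indicator E \<omega>) \<partial>M)
        \<le> ennreal (exp (\<nu>\<^sup>2 / 2 * (norm f)\<^sup>2))" .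
  qed
qed

end
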